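(* Let $m\ge2$, $k\ge2$, $n\ge1$, $\mathcal{A}=(a_{i_1i_2\cdots i_m})\in\mathbb{C}^{[m,n]}$ and $\mathcal{B}=(b_{i_1i_2\cdots i_k})\in\mathbb{C}^{[k,n]}$, and suppose the digraph $\Gamma_{\mathcal{A}\mathcal{B}}$ is weakly connected. For $i\in[n]$ let $c_{i\cdots i}=\sum_{i_2,\ldots,i_m=1}^n a_{ii_2\cdots i_m}b_{i_2i\cdots i}\cdots b_{i_mi\cdots i}$ (the diagonal entries of $\mathcal{A}\mathcal{B}$). Then \[\sigma(\mathcal{A}\mathcal{B})\subseteq\mathbf{B}=\bigcup_{\gamma\in C(\mathcal{A}\mathcal{B})}\Big\{z\in\mathbb{C}:\prod_{i\in\gamma}|z-c_{i\cdots i}|\le\prod_{i\in\gamma}\big(r_i(\mathcal{A})(R(\mathcal{B}))^{m-1}-|c_{i\cdots i}|\big)\Big\}\subseteq\mathbf{G},\] where $\mathbf{G}=\bigcup_{i\in[n]}\{z\in\mathbb{C}:|z-c_{i\cdots i}|\le r_i(\mathcal{A})(R(\mathcal{B}))^{m-1}-|c_{i\cdots i}|\}$.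
   Context: $[n]=\{1,\ldots,n\}$. $\mathbb{C}^{[m,n]}$ denotes the set of order $m$, dimension $n$ complex tensors. For a tensor $\mathcal{T}=(t_{i_1\cdots i_p})$ of order $p$ and dimension $n$: $r_i(\mathcal{T})=\sum_{i_2,\ldots,i_p=1}^n|t_{ii_2\cdots i_p}|$, $R(\mathcal{T})=\max_{i\in[n]}r_i(\mathcal{T})$. General product: $\mathcal{A}\mathcal{B}=(c_{i\alpha_1\cdots\alpha_{m-1}})$ is the order $(m-1)(k-1)+1$, dimension $n$ tensor with $c_{i\alpha_1\cdots\alpha_{m-1}}=\sum_{i_2,\ldots,i_m=1}^n a_{ii_2\cdots i_m}b_{i_2\alpha_1}\cdots b_{i_m\alpha_{m-1}}$, $i\in[n]$, $\alpha_j\in[n]^{k-1}$ (where $b_{j\alpha}$ with $\alpha=(j_2,\ldots,j_k)$ means $b_{jj_2\cdots j_k}$). Eigenvalues of a tensor $\mathcal{T}$ of order $p\ge2$: $\lambda\in\mathbb{C}$ such that there is a nonzero $x\in\mathbb{C}^n$ with $\sum_{i_2,\ldots,i_p=1}^n t_{ii_2\cdots i_p}x_{i_2}\cdots x_{i_p}=\lambda x_i^{p-1}$ for all $i\in[n]$; $\sigma(\mathcal{T})$ is the set of eigenvalues. Digraph: for a tensor $\mathcal{T}=(t_{i_1\cdots i_p})$ of dimension $n$, $\Gamma_{\mathcal{T}}$ has vertex set $[n]$ and arc set $\{(i,j): t_{ii_2\cdots i_p}\neq0 \text{ for some } (i_2,\ldots,i_p)\neq(i,\ldots,i) \text{ with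 } j\in\{i_2,\ldots,i_p\}\}$. A circuit is a sequence of distinct vertices $i_1,\ldots,i_q$ ($q\ge1$) with arcs $(i_1,i_2),\ldots,(i_{q-1},i_q),(i_q,i_1)$ (for $q=1$, a loop $(i_1,i_1)$); $C(\mathcal{T})$ is the set of circuits of $\Gamma_{\mathcal{T}}$, and $i\in\gamma$ means $i$ is a vertex of the circuit $\gamma$. $\Gamma_{\mathcal{T}}$ is called weakly connected if every vertex belongs to some circuit. *)

theory Defs
  imports Complex_Main
begin

text \<open>Conventions: the index set [n] is represented by {0..<n}. A tensor of order p and
dimension n is a function T :: nat list \<Rightarrow> complex; only its values on index lists
of length p with entries < n matter. The entry t_{i_1...i_p} is T [i_1,...,i_p].\<close>

definition tidx :: "nat \<Rightarrow> nat \<Rightarrow> nat list set" where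
  "tidx p n = {xs. length xs = p \<and> (\<forall>x\<in>set xs. x < n)}"

definition rsum :: "(nat list \<Rightarrow> complex) \<Rightarrow> nat \<Rightarrow> nat \<Rightarrow> nat \<Rightarrow> real" where
  "rsum T p n i = (\<Sum>ys\<in>tidx (p - 1) n. cmod (T (i # ys)))"

definition Rmax :: "(nat list \<Rightarrow> complex) \<Rightarrow> nat \<Rightarrow> nat \<Rightarrow> real" where
  "Rmax T p n = Max ((\<lambda>i. rsum T p n i) ` {..<n})"

text \<open>General product of A (order m) and B (order k), dimension n; the result has order
(m-1)(k-1)+1 and entry at i # alpha_1 @ ... @ alpha_{m-1} (each alpha_j of length k-1).\<close>
definition tprod :: "(nat list \<Rightarrow> complex) \<Rightarrow> nat \<Rightarrow> (nat list \<Rightarrow> complex) \<Rightarrow> nat \<Rightarrow> nat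
    \<Rightarrow> nat list \<Rightarrow> complex" where
  "tprod A m B k n xs =
     (\<Sum>is\<in>tidx (m - 1) n. A (hd xs # is) *
        (\<Prod>j<m - 1. B ((is ! j) # take (k - 1) (drop (1 + j * (k - 1)) xs))))"

definition is_eig :: "(nat list \<Rightarrow> complex) \<Rightarrow> nat \<Rightarrow> nat \<Rightarrow> complex \<Rightarrow> bool" where
  "is_eig T p n lam \<longleftrightarrow> (\<exists>x :: nat \<Rightarrow> complex. (\<exists>i<n. x i \<noteq> 0) \<and>
     (\<forall>i<n. (\<Sum>is\<in>tidx (p - 1) n. T (i # is) * (\<Prod>j<p - 1. x (is ! j))) = lam * x i ^ (p - 1)))"

definition spectrum_t :: "(nat list \<Rightarrow> complex) \<Rightarrow> nat \<Rightarrow> nat \<Rightarrow> complex set" where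
  "spectrum_t T p n = {lam. is_eig T p n lam}"

definition arc :: "(nat list \<Rightarrow> complex) \<Rightarrow> nat \<Rightarrow> nat \<Rightarrow> nat \<Rightarrow> nat \<Rightarrow> bool" where
  "arc T p n i j \<longleftrightarrow> i < n \<and> j < n \<and>
     (\<exists>ys\<in>tidx (p - 1) n. T (i # ys) \<noteq> 0 \<and> ys \<noteq> replicate (p - 1) i \<and> j \<in> set ys)"

definition circuit :: "(nat list \<Rightarrow> complex) \<Rightarrow> nat \<Rightarrow> nat \<Rightarrow> nat list \<Rightarrow> bool" where
  "circuit T p n cs \<longleftrightarrow> cs \<noteq> [] \<and> distinct cs \<and> (\<forall>x\<in>set cs. x < n) \<and>
     (\<forall>j<length cs. arc T p n (cs ! j) (cs ! ((j + 1) mod length cs)))"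

definition weakly_connected :: "(nat list \<Rightarrow> complex) \<Rightarrow> nat \<Rightarrow> nat \<Rightarrow> bool" where
  "weakly_connected T p n \<longleftrightarrow> (\<forall>i<n. \<exists>cs. circuit T p n cs \<and> i \<in> set cs)"

end

theory Submission
  imports Defs
begin

lemma finite_tidx: "finite (tidx p n)"
proof -
  have "tidx p n \<subseteq> {xs. set xs \<subseteq> {..<n} \<and> length xs = p}"
    by (auto simp: tidx_def)
  thus ?thesis using finite_lists_length_eq[of "{..<n}" p] finite_subset by blast
qed

lemma tidx_append: "tidx (a+b) n = (\<lambda>(u,v). u@v) ` (tidx a n \<times> tidx b n)"
proof
  show "(\<lambda>(u,v). u@v) ` (tidx a n \<times> tidx b n) \<subseteq> tidx (a+b) n"
    by (auto simp: tidx_def)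
next
  show "tidx (a+b) n \<subseteq> (\<lambda>(u,v). u@v) ` (tidx a n \<times> tidx b n)"
  proof
    fix xs assume xs: "xs \<in> tidx (a+b) n"
    have "xs = (\<lambda>(u,v). u@v) (take a xs, drop a xs)" by simp
    moreover have "(take a xs, drop a xs) \<in> tidx a n \<times> tidx b n"
      using xs by (auto simp: tidx_def dest: in_set_takeD in_set_dropD)
    ultimately show "xs \<in> (\<lambda>(u,v). u@v) ` (tidx a n \<times> tidx b n)" by blast
  qed
qed

lemma inj_app: "inj_on (\<lambda>(u,v). u@v) (tidx a n \<times> tidx b n)"
  by (auto simp: inj_on_def tidx_def)

lemma sum_tidx_append:
  "(\<Sum>\<alpha>\<in>tidx (a+b) n. f \<alpha>) = (\<Sum>u\<in>tidx a n. \<Sum>v\<in>tidx b n. f (u@v))"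
  unfolding tidx_append by (subst sum.reindex[OF inj_app]) (simp add: sum.cartesian_product case_prod_beta')

lemma tidx_0: "tidx 0 n = {[]}" by (auto simp: tidx_def)

lemma block:
  fixes g :: "nat \<Rightarrow> nat list \<Rightarrow> 'a::comm_semiring_1"
  shows "(\<Sum>\<alpha>\<in>tidx (L*r) n. \<Prod>j<L. g j (take r (drop (j*r) \<alpha>))) = (\<Prod>j<L. \<Sum>\<beta>\<in>tidx r n. g j \<beta>)"
proof (induction L arbitrary: g)
  case 0
  then show ?case by (simp add: tidx_0)
next
  case (Suc L)
  have "(\<Sum>\<alpha>\<in>tidx (Suc L*r) n. \<Prod>j<Suc L. g j (take r (drop (j*r) \<alpha>)))
      = (\<Sum>u\<in>tidx r n. \<Sum>v\<in>tidx (L*r) n. \<Prod>j<Suc L. g j (take r (drop (j*r) (u@v))))"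
    by (simp only: mult_Suc sum_tidx_append)
  also have "\<dots> = (\<Sum>u\<in>tidx r n. \<Sum>v\<in>tidx (L*r) n. g 0 u * (\<Prod>j<L. g (Suc j) (take r (drop (j*r) v))))"
  proof (intro sum.cong refl)
    fix u v assume u: "u \<in> tidx r n"
    hence lu: "length u = r" by (simp add: tidx_def)
    show "(\<Prod>j<Suc L. g j (take r (drop (j*r) (u@v)))) = g 0 u * (\<Prod>j<L. g (Suc j) (take r (drop (j*r) v)))"
      unfolding prod.lessThan_Suc_shift using lu by simp
  qed
  also have "\<dots> = (\<Sum>u\<in>tidx r n. g 0 u) * (\<Sum>v\<in>tidx (L*r) n. \<Prod>j<L. g (Suc j) (take r (drop (j*r) v)))"
    by (rule sum_product[symmetric])
  also have "\<dots> = (\<Prod>j<Suc L. \<Sum>\<beta>\<in>tidx r n. g j \<beta>)"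
    unfolding prod.lessThan_Suc_shift using Suc.IH[of "\<lambda>j. g (Suc j)"] by simp
  finally show ?case .
qed

lemma tprod_row: "tprod A m B k n (i # \<alpha>) = (\<Sum>is\<in>tidx (m-1) n. A (i#is) *
   (\<Prod>j<m-1. B (is!j # take (k-1) (drop (j*(k-1)) \<alpha>))))"
  by (simp add: tprod_def)

lemma rsum_nonneg: "0 \<le> rsum T p n i"
  by (simp add: rsum_def sum_nonneg)

lemma rsum_le_Rmax: "j < n \<Longrightarrow> rsum B k n j \<le> Rmax B k n"
  unfolding Rmax_def by (rule Max_ge) auto

lemma rowsum_le:
  assumes "i < n"
  shows "(\<Sum>\<alpha>\<in>tidx ((m-1)*(k-1)) n. cmod (tprod A m B k n (i#\<alpha>)))
     \<le> rsum A m n i * Rmax B k n ^ (m-1)"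
proof -
  let ?q = "(m-1)*(k-1)"
  let ?R = "Rmax B k n"
  have "(\<Sum>\<alpha>\<in>tidx ?q n. cmod (tprod A m B k n (i#\<alpha>)))
      \<le> (\<Sum>\<alpha>\<in>tidx ?q n. \<Sum>is\<in>tidx (m-1) n. cmod (A (i#is)) *
           (\<Prod>j<m-1. cmod (B (is!j # take (k-1) (drop (j*(k-1)) \<alpha>)))))"
    unfolding tprod_row
    by (intro sum_mono order.trans[OF norm_sum]) (simp add: norm_mult prod_norm)
  also have "\<dots> = (\<Sum>is\<in>tidx (m-1) n. cmod (A (i#is)) *
       (\<Sum>\<alpha>\<in>tidx ?q n. \<Prod>j<m-1. cmod (B (is!j # take (k-1) (drop (j*(k-1)) \<alpha>)))))"
    by (subst sum.swap) (simp add: sum_distrib_left)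
  also have "\<dots> = (\<Sum>is\<in>tidx (m-1) n. cmod (A (i#is)) * (\<Prod>j<m-1. rsum B k n (is!j)))"
    unfolding block[where g="\<lambda>j \<beta>. cmod (B (_ ! j # \<beta>))"] by (simp add: rsum_def)
  also have "\<dots> \<le> (\<Sum>is\<in>tidx (m-1) n. cmod (A (i#is)) * ?R ^ (m-1))"
  proof (intro sum_mono mult_left_mono)
    fix ts assume "ts \<in> tidx (m-1) n"
    hence "\<And>j. j < m-1 \<Longrightarrow> ts!j < n" by (auto simp: tidx_def)
    hence "(\<Prod>j<m-1. rsum B k n (ts!j)) \<le> (\<Prod>j<m-1. ?R)"
      by (intro prod_mono) (simp add: rsum_nonneg rsum_le_Rmax)
    thus "(\<Prod>j<m-1. rsum B k n (ts!j)) \<le> ?R ^ (m-1)" by simp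
  qed simp
  also have "\<dots> = rsum A m n i * ?R ^ (m-1)"
    by (simp add: rsum_def sum_distrib_right)
  finally show ?thesis .
qed

lemma diag_entry:
  assumes "m \<ge> 2" "k \<ge> 2"
  shows "tprod A m B k n (i # replicate ((m-1)*(k-1)) i) =
    (\<Sum>ts\<in>tidx (m-1) n. A (i#ts) * (\<Prod>j<m-1. B (ts!j # replicate (k-1) i)))"
  unfolding tprod_row
proof (intro sum.cong refl arg_cong2[where f="(*)"] prod.cong)
  fix ts j assume "j \<in> {..<m-1}"
  hence "Suc j * (k-1) \<le> (m-1)*(k-1)" by (intro mult_le_mono1) simp
  hence "k - 1 \<le> (m-1)*(k-1) - j*(k-1)" by simp
  thus "B (ts ! j # take (k-1) (drop (j*(k-1)) (replicate ((m-1)*(k-1)) i))) = B (ts!j # replicate (k-1) i)"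
    by (simp add: min_def)
qed

lemma finite_max_ex:
  fixes f :: "nat \<Rightarrow> real"
  assumes "finite N" "N \<noteq> {}"
  shows "\<exists>j\<in>N. \<forall>j'\<in>N. f j' \<le> f j"
proof -
  have "Max (f ` N) \<in> f ` N" using assms by simp
  then obtain j where "j \<in> N" "f j = Max (f ` N)" by auto
  moreover have "\<forall>j'\<in>N. f j' \<le> Max (f ` N)" using assms by simp
  ultimately show ?thesis by metis
qed

lemma brualdi_core:
  fixes T :: "nat list \<Rightarrow> complex" and c :: "nat \<Rightarrow> complex" and \<rho> :: "nat \<Rightarrow> real"
  assumes wc: "weakly_connected T (Suc q) n"
    and diag: "\<And>i. i < n \<Longrightarrow> T (i # replicate q i) = c i"
    and bound: "\<And>i. i < n \<Longrightarrow> (\<Sum>\<alpha>\<in>tidx q n. cmod (T (i#\<alpha>))) \<le> \<rho> i + cmod (c i)"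
    and eig: "is_eig T (Suc q) n lam" and qpos: "0 < q"
  shows "\<exists>cs. circuit T (Suc q) n cs \<and> (\<Prod>i\<in>set cs. cmod (lam - c i)) \<le> (\<Prod>i\<in>set cs. \<rho> i)"
proof -
  obtain x :: "nat \<Rightarrow> complex" where i0: "\<exists>i<n. x i \<noteq> 0"
    and eq: "\<And>i. i < n \<Longrightarrow> (\<Sum>is\<in>tidx q n. T (i # is) * (\<Prod>j<q. x (is ! j))) = lam * x i ^ q"
    using eig unfolding is_eig_def by auto
  define N where "N i = {j. arc T (Suc q) n i j}" for i
  define r' where "r' i = (\<Sum>\<alpha>\<in>tidx q n - {replicate q i}. cmod (T (i#\<alpha>)))" for i
  have rep_in: "replicate q i \<in> tidx q n" if "i < n" for i using that by (simp add: tidx_def)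
  have r'_eq: "r' i = (\<Sum>\<alpha>\<in>tidx q n. cmod (T (i#\<alpha>))) - cmod (c i)" if "i < n" for i
    unfolding r'_def using sum.remove[OF finite_tidx rep_in[OF that], of "\<lambda>\<alpha>. cmod (T (i#\<alpha>))"]
      diag[OF that] by simp
  have r'_nn: "0 \<le> r' i" for i unfolding r'_def by (simp add: sum_nonneg)
  have r'_le: "r' i \<le> \<rho> i" if "i < n" for i using r'_eq[OF that] bound[OF that] by simp
  have \<rho>_nn: "0 \<le> \<rho> i" if "i < n" for i using r'_nn[of i] r'_le[OF that] by simp
  have circ_ex: "\<exists>cs. circuit T (Suc q) n cs \<and> i \<in> set cs" if "i < n" for i
    using wc that unfolding weakly_connected_def by blast
  have N_ne: "N i \<noteq> {}" if ilt: "i < n" for i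
  proof -
    obtain cs where cs: "circuit T (Suc q) n cs" "i \<in> set cs" using circ_ex[OF ilt] by blast
    then obtain j where "j < length cs" "cs ! j = i" by (auto simp: in_set_conv_nth)
    with cs(1) have "arc T (Suc q) n i (cs ! ((j+1) mod length cs))" unfolding circuit_def by auto
    thus ?thesis unfolding N_def by auto
  qed
  have N_sub: "N i \<subseteq> {..<n}" for i unfolding N_def arc_def by auto
  have N_fin: "finite (N i)" for i using N_sub finite_subset by blast
  define s where "s i = (SOME j. j \<in> N i \<and> (\<forall>j'\<in>N i. cmod (x j') \<le> cmod (x j)))" for i
  have s_prop: "s i \<in> N i \<and> (\<forall>j'\<in>N i. cmod (x j') \<le> cmod (x (s i)))" if "i < n" for i
    unfolding s_def
    by (rule someI_ex) (use finite_max_ex[OF N_fin N_ne[OF that], of "\<lambda>j. cmod (x j)"] in blast)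
  have s_lt: "s i < n" if "i < n" for i using s_prop[OF that] N_sub by blast
  have key: "cmod (lam - c i) * cmod (x i) ^ q \<le> r' i * cmod (x (s i)) ^ q" if "i < n" for i
  proof -
    let ?f = "\<lambda>\<alpha>. T (i # \<alpha>) * (\<Prod>j<q. x (\<alpha> ! j))"
    have "(\<Sum>\<alpha>\<in>tidx q n. ?f \<alpha>) = ?f (replicate q i) + (\<Sum>\<alpha>\<in>tidx q n - {replicate q i}. ?f \<alpha>)"
      by (rule sum.remove[OF finite_tidx rep_in[OF that]])
    also have "?f (replicate q i) = c i * x i ^ q"
      using diag[OF that] by simp
    finally have "(lam - c i) * x i ^ q = (\<Sum>\<alpha>\<in>tidx q n - {replicate q i}. ?f \<alpha>)"
      using eq[OF that] by (simp add: algebra_simps)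
    hence "cmod (lam - c i) * cmod (x i) ^ q = cmod (\<Sum>\<alpha>\<in>tidx q n - {replicate q i}. ?f \<alpha>)"
      by (metis norm_mult norm_power)
    also have "\<dots> \<le> (\<Sum>\<alpha>\<in>tidx q n - {replicate q i}. cmod (?f \<alpha>))" by (rule norm_sum)
    also have "\<dots> \<le> (\<Sum>\<alpha>\<in>tidx q n - {replicate q i}. cmod (T (i#\<alpha>)) * cmod (x (s i)) ^ q)"
    proof (rule sum_mono)
      fix \<alpha> assume \<alpha>: "\<alpha> \<in> tidx q n - {replicate q i}"
      show "cmod (?f \<alpha>) \<le> cmod (T (i#\<alpha>)) * cmod (x (s i)) ^ q"
      proof (cases "T (i#\<alpha>) = 0")
        case True thus ?thesis by simp
      next
        case False
        have "(\<Prod>j<q. cmod (x (\<alpha> ! j))) \<le> (\<Prod>j<q. cmod (x (s i)))"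
        proof (rule prod_mono)
          fix j assume j: "j \<in> {..<q}"
          have len: "length \<alpha> = q" and lt: "\<forall>y\<in>set \<alpha>. y < n" using \<alpha> by (auto simp: tidx_def)
          have mem: "\<alpha> ! j \<in> set \<alpha>" using j len by simp
          have "arc T (Suc q) n i (\<alpha> ! j)"
            unfolding arc_def using that lt mem \<alpha> False by auto
          hence "\<alpha> ! j \<in> N i" by (simp add: N_def)
          thus "0 \<le> cmod (x (\<alpha> ! j)) \<and> cmod (x (\<alpha> ! j)) \<le> cmod (x (s i))"
            using s_prop[OF that] by simp
        qed
        thus ?thesis by (simp add: norm_mult prod_norm mult_left_mono)
      qed
    qed
    also have "\<dots> = r' i * cmod (x (s i)) ^ q" by (simp add: r'_def sum_distrib_right)
    finally show ?thesis .
  qed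
  show ?thesis
  proof (cases "\<exists>i<n. x i \<noteq> 0 \<and> x (s i) = 0")
    case True
    then obtain i where i: "i < n" "x i \<noteq> 0" "x (s i) = 0" by blast
    have "cmod (lam - c i) * cmod (x i) ^ q \<le> 0" using key[OF i(1)] i(3) qpos by (simp add: zero_power)
    moreover have "cmod (x i) ^ q > 0" using i(2) by simp
    ultimately have "cmod (lam - c i) \<le> 0" by (simp add: mult_le_0_iff)
    hence li: "lam - c i = 0" by simp
    obtain cs where cs: "circuit T (Suc q) n cs" "i \<in> set cs" using circ_ex[OF i(1)] by blast
    have z: "(\<Prod>i\<in>set cs. cmod (lam - c i)) = 0"
      using cs(2) li by (intro prod_zero) auto
    have nn: "0 \<le> (\<Prod>i\<in>set cs. \<rho> i)"
      using cs(1) \<rho>_nn by (intro prod_nonneg) (auto simp: circuit_def)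
    show ?thesis using cs(1) by (intro exI[of _ cs]) (simp only: z nn simp_thms)
  next
    case False
    define W where "W = {i. i < n \<and> x i \<noteq> 0}"
    have sW: "s i \<in> W" if "i \<in> W" for i using that False s_lt by (auto simp: W_def)
    obtain i0 where i0W: "i0 \<in> W" using i0 by (auto simp: W_def)
    have itW: "(s ^^ j) i0 \<in> W" for j by (induction j) (auto simp: i0W sW)
    have WS: "W \<subseteq> {..<n}" by (auto simp: W_def)
    have "\<not> inj_on (\<lambda>j. (s ^^ j) i0) {..n}"
    proof
      assume inj: "inj_on (\<lambda>j. (s ^^ j) i0) {..n}"
      have "(\<lambda>j. (s ^^ j) i0) ` {..n} \<subseteq> {..<n}" using itW WS by blast
      hence "card ((\<lambda>j. (s ^^ j) i0) ` {..n}) \<le> n" by (metis card_lessThan card_mono finite_lessThan)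
      thus False using card_image[OF inj] by simp
    qed
    then obtain a b where ab: "a < b" "(s ^^ a) i0 = (s ^^ b) i0"
      unfolding inj_on_def by (metis linorder_neqE_nat)
    define v where "v = (s ^^ a) i0"
    have "(s ^^ (b - a)) ((s ^^ a) i0) = (s ^^ (b - a + a)) i0" by (simp add: funpow_add)
    also have "b - a + a = b" using ab(1) by simp
    finally have "(s ^^ (b - a)) v = v" unfolding v_def using ab(2) by simp
    hence exd: "0 < b - a \<and> (s ^^ (b - a)) v = v" using ab by simp
    define d where "d = (LEAST d. 0 < d \<and> (s ^^ d) v = v)"
    have d: "0 < d" "(s ^^ d) v = v" using LeastI_ex[of "\<lambda>d. 0 < d \<and> (s ^^ d) v = v"] exd
      unfolding d_def by blast+
    have dmin: "(s ^^ e) v \<noteq> v" if "0 < e" "e < d" for e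
      using not_less_Least[of e "\<lambda>d. 0 < d \<and> (s ^^ d) v = v"] that unfolding d_def by blast
    define f where "f j = (s ^^ j) v" for j
    have fW: "f j \<in> W" for j unfolding f_def v_def using itW[of "j + a"] by (simp add: funpow_add)
    have fS: "f (Suc j) = s (f j)" for j unfolding f_def by simp
    have fn: "f j < n" for j using fW[of j] by (simp add: W_def)
    have inj: "inj_on f {..<d}"
    proof (rule inj_onI)
      have aux: False if "i < j" "j < d" "f i = f j" for i j
      proof -
        have "(s ^^ (d - j)) (f i) = (s ^^ (d - j)) (f j)" using that by simp
        moreover have "(s ^^ (d - j)) (f i) = (s ^^ (d - j + i)) v" unfolding f_def by (simp add: funpow_add)
        moreover have "(s ^^ (d - j)) (f j) = (s ^^ (d - j + j)) v" unfolding f_def by (simp add: funpow_add)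
        moreover have "d - j + j = d" using that by simp
        ultimately have "(s ^^ (d - j + i)) v = (s ^^ d) v" by simp
        moreover have "0 < d - j + i" "d - j + i < d" using that by auto
        ultimately show False using dmin[of "d - j + i"] d by simp
      qed
      fix i j assume "i \<in> {..<d}" "j \<in> {..<d}" "f i = f j"
      thus "i = j" using aux[of i j] aux[of j i] by (metis lessThan_iff linorder_neqE_nat)
    qed
    define cs where "cs = map f [0..<d]"
    have len: "length cs = d" by (simp add: cs_def)
    have nth: "cs ! j = f j" if "j < d" for j using that by (simp add: cs_def)
    have setcs: "set cs = f ` {..<d}" by (auto simp: cs_def)
    have circ: "circuit T (Suc q) n cs"
      unfolding circuit_def
    proof (intro conjI ballI allI impI)
      show "cs \<noteq> []" using d(1) len by auto
      show "distinct cs" unfolding cs_def distinct_map using inj by (simp add: atLeast0LessThan)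
      fix y assume "y \<in> set cs" thus "y < n" unfolding setcs using fn by blast
    next
      fix j assume j: "j < length cs"
      have "cs ! ((j + 1) mod length cs) = s (cs ! j)"
      proof (cases "j + 1 < d")
        case True thus ?thesis using j len nth fS by simp
      next
        case False
        hence jd: "j + 1 = d" using j len by simp
        hence "(j + 1) mod length cs = 0" using len by simp
        hence "cs ! ((j + 1) mod length cs) = f 0" using nth d(1) by simp
        also have "f 0 = v" by (simp add: f_def)
        also have "v = f (Suc j)" using d(2) jd by (simp add: f_def)
        also have "\<dots> = s (cs ! j)" using fS[of j] nth[of j] jd by simp
        finally show ?thesis .
      qed
      moreover have "cs ! j < n" using j len nth fn by simp
      ultimately show "arc T (Suc q) n (cs ! j) (cs ! ((j + 1) mod length cs))"
        using s_prop N_def by simp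
    qed
    define y where "y j = cmod (x (f j)) ^ q" for j
    have ypos: "0 < y j" for j using fW[of j] by (simp add: y_def W_def)
    have "(\<Prod>j<d. cmod (lam - c (f j)) * y j) \<le> (\<Prod>j<d. r' (f j) * y (Suc j))"
    proof (rule prod_mono)
      fix j assume "j \<in> {..<d}"
      have "cmod (lam - c (f j)) * y j \<le> r' (f j) * y (Suc j)"
        using key[OF fn[of j]] by (simp add: y_def fS)
      thus "0 \<le> cmod (lam - c (f j)) * y j \<and> cmod (lam - c (f j)) * y j \<le> r' (f j) * y (Suc j)"
        using ypos[of j] by simp
    qed
    moreover have "(\<Prod>j<d. y (Suc j)) = (\<Prod>j<d. y j)"
    proof -
      have "y 0 * (\<Prod>j<d. y (Suc j)) = (\<Prod>j<d. y j) * y d"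
        using prod.lessThan_Suc_shift[of y d] prod.lessThan_Suc[of y d] by simp
      moreover have "y d = y 0" using d(2) by (simp add: y_def f_def)
      ultimately show ?thesis using ypos[of 0] by (simp add: mult.commute)
    qed
    ultimately have "(\<Prod>j<d. cmod (lam - c (f j))) * (\<Prod>j<d. y j) \<le> (\<Prod>j<d. r' (f j)) * (\<Prod>j<d. y j)"
      by (simp add: prod.distrib)
    moreover have "0 < (\<Prod>j<d. y j)" using ypos by (simp add: prod_pos)
    ultimately have "(\<Prod>j<d. cmod (lam - c (f j))) \<le> (\<Prod>j<d. r' (f j))" by simp
    also have "\<dots> \<le> (\<Prod>j<d. \<rho> (f j))"
      using r'_nn r'_le fn by (intro prod_mono) auto
    finally have "(\<Prod>i\<in>set cs. cmod (lam - c i)) \<le> (\<Prod>i\<in>set cs. \<rho> i)"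
      unfolding setcs prod.reindex[OF inj] by simp
    thus ?thesis using circ by blast
  qed
qed


theorem theorem4p4:
  fixes A B :: "nat list \<Rightarrow> complex" and m k n :: nat
    and c :: "nat \<Rightarrow> complex"
  assumes "m \<ge> 2" and "k \<ge> 2" and "n \<ge> 1"
    and "weakly_connected (tprod A m B k n) ((m - 1) * (k - 1) + 1) n"
    and "\<And>i. c i = (\<Sum>is\<in>tidx (m - 1) n. A (i # is) *
                (\<Prod>j<m - 1. B ((is ! j) # replicate (k - 1) i)))"
  shows "spectrum_t (tprod A m B k n) ((m - 1) * (k - 1) + 1) n
           \<subseteq> (\<Union>cs\<in>{cs. circuit (tprod A m B k n) ((m - 1) * (k - 1) + 1) n cs}.
                {z. (\<Prod>i\<in>set cs. cmod (z - c i))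
                    \<le> (\<Prod>i\<in>set cs. rsum A m n i * Rmax B k n ^ (m - 1) - cmod (c i))})
       \<and> (\<Union>cs\<in>{cs. circuit (tprod A m B k n) ((m - 1) * (k - 1) + 1) n cs}.
                {z. (\<Prod>i\<in>set cs. cmod (z - c i))
                    \<le> (\<Prod>i\<in>set cs. rsum A m n i * Rmax B k n ^ (m - 1) - cmod (c i))})
           \<subseteq> (\<Union>i\<in>{..<n}. {z. cmod (z - c i) \<le> rsum A m n i * Rmax B k n ^ (m - 1) - cmod (c i)})"
proof -
  define T where "T = tprod A m B k n"
  define q where "q = (m - 1) * (k - 1)"
  define \<rho> where "\<rho> i = rsum A m n i * Rmax B k n ^ (m - 1) - cmod (c i)" for i
  have p: "(m - 1) * (k - 1) + 1 = Suc q" by (simp add: q_def)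
  have qpos: "0 < q" using assms(1,2) by (simp add: q_def)
  have diag: "T (i # replicate q i) = c i" for i
    unfolding T_def q_def using diag_entry[OF assms(1,2)] assms(5) by simp
  have S_le: "(\<Sum>\<alpha>\<in>tidx q n. cmod (T (i#\<alpha>))) \<le> rsum A m n i * Rmax B k n ^ (m - 1)" if "i < n" for i
    unfolding T_def q_def by (rule rowsum_le[OF that])
  have c_le: "cmod (c i) \<le> (\<Sum>\<alpha>\<in>tidx q n. cmod (T (i#\<alpha>)))" if "i < n" for i
  proof -
    have "replicate q i \<in> tidx q n" using that by (simp add: tidx_def)
    hence "cmod (T (i # replicate q i)) \<le> (\<Sum>\<alpha>\<in>tidx q n. cmod (T (i#\<alpha>)))"
      by (intro member_le_sum finite_tidx) auto
    thus ?thesis using diag by simp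
  qed
  have \<rho>_nn: "0 \<le> \<rho> i" if "i < n" for i using S_le[OF that] c_le[OF that] by (simp add: \<rho>_def)
  have wc: "weakly_connected T (Suc q) n" using assms(4) unfolding T_def p .
  have part1: "spectrum_t T (Suc q) n \<subseteq> (\<Union>cs\<in>{cs. circuit T (Suc q) n cs}.
                {z. (\<Prod>i\<in>set cs. cmod (z - c i)) \<le> (\<Prod>i\<in>set cs. \<rho> i)})"
  proof
    fix lam assume "lam \<in> spectrum_t T (Suc q) n"
    hence ev: "is_eig T (Suc q) n lam" by (simp add: spectrum_t_def)
    have bnd: "(\<Sum>\<alpha>\<in>tidx q n. cmod (T (i#\<alpha>))) \<le> \<rho> i + cmod (c i)" if "i < n" for i
      using S_le[OF that] by (simp add: \<rho>_def)
    from brualdi_core[OF wc diag bnd ev qpos]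
    obtain cs where "circuit T (Suc q) n cs" "(\<Prod>i\<in>set cs. cmod (lam - c i)) \<le> (\<Prod>i\<in>set cs. \<rho> i)"
      by blast
    thus "lam \<in> (\<Union>cs\<in>{cs. circuit T (Suc q) n cs}.
                {z. (\<Prod>i\<in>set cs. cmod (z - c i)) \<le> (\<Prod>i\<in>set cs. \<rho> i)})" by blast
  qed
  have part2: "(\<Union>cs\<in>{cs. circuit T (Suc q) n cs}.
                {z. (\<Prod>i\<in>set cs. cmod (z - c i)) \<le> (\<Prod>i\<in>set cs. \<rho> i)})
          \<subseteq> (\<Union>i\<in>{..<n}. {z. cmod (z - c i) \<le> \<rho> i})"
  proof
    fix z assume "z \<in> (\<Union>cs\<in>{cs. circuit T (Suc q) n cs}.
                {z. (\<Prod>i\<in>set cs. cmod (z - c i)) \<le> (\<Prod>i\<in>set cs. \<rho> i)})"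
    then obtain cs where cs: "circuit T (Suc q) n cs" "(\<Prod>i\<in>set cs. cmod (z - c i)) \<le> (\<Prod>i\<in>set cs. \<rho> i)"
      by blast
    have lt: "\<forall>i\<in>set cs. i < n" and ne: "cs \<noteq> []" using cs(1) by (auto simp: circuit_def)
    show "z \<in> (\<Union>i\<in>{..<n}. {z. cmod (z - c i) \<le> \<rho> i})"
    proof (rule ccontr)
      assume "z \<notin> (\<Union>i\<in>{..<n}. {z. cmod (z - c i) \<le> \<rho> i})"
      hence gt: "\<And>i. i < n \<Longrightarrow> \<rho> i < cmod (z - c i)" by force
      obtain i where i: "i \<in> set cs" using ne by (cases cs) auto
      have "(\<Prod>i\<in>set cs. \<rho> i) < (\<Prod>i\<in>set cs. cmod (z - c i))"
      proof (rule prod_mono_strict[OF i])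
        show "\<rho> i < cmod (z - c i)" using gt lt i by blast
        show "finite (set cs)" by simp
        fix j assume "j \<in> set cs"
        hence "j < n" using lt by blast
        thus "0 \<le> \<rho> j \<and> \<rho> j \<le> cmod (z - c j)" using gt \<rho>_nn by (auto simp: less_imp_le)
        show "0 < cmod (z - c j)" using gt \<rho>_nn \<open>j < n\<close> by (meson le_less_trans)
      qed
      thus False using cs(2) by simp
    qed
  qed
  show ?thesis using part1 part2 unfolding T_def \<rho>_def p by blast
qed

end
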